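(* Let $M=\frac{1}{3^{2/3}-2}$. Let the open intervals $J_n^k\subset[0,M]$ ($n\ge 1$, $1\le k\le 2^{n-1}$) be constructed as follows: $J_1^1$ is the open interval of length $3^{-2/3}$ centered at the midpoint of $[0,M]$; for $n\ge 2$, the intervals $J_n^1,\dots,J_n^{2^{n-1}}$ are the open intervals of length $(3^{2/3})^{-n}$ centered at the midpoints of the $2^{n-1}$ connected components of $[0,M]\setminus(J_1\cup\dots\cup J_{n-1})$, where $J_m=\bigcup_{k=1}^{2^{m-1}}J_m^k$. Let $A=[0,M]\setminus\bigcup_{n\ge1}J_n$. Define $g:[0,M]\to\mathbb{R}$ by $g=0$ on $A$ and $g(x)=\frac{4}{\mathcal{L}(J_n^k)^{1/2}}\mathrm{dist}(x,\partial J_n^k)$ for $x\in J_n^k$, and define $f:[0,M]\to[0,1]$ by $f(x)=\int_0^x g(t)\,dt$. Let $C\subset[0,1]$ be the ternary Cantor set. Then: (1) $f$ is $C^1$; (2) $f'(x)=0$ if and only if $x\in A$; (3) $f(A)=C$.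
   Context: $\mathcal{L}$ denotes Lebesgue measure (length); $\partial J$ is the set of endpoints of an interval $J$. The ternary Cantor set is $C=[0,1]\setminus\bigcup_{n\ge1}\bigcup_{k=1}^{2^{n-1}}I_n^k$, where the open intervals $I_n^k$ of length $3^{-n}$ are centered at the midpoints of the connected components of $[0,1]$ minus the previously removed intervals of stages $1,\dots,n-1$. *)

theory Defs
  imports "HOL-Analysis.Analysis"
begin

definition centered_int :: "real \<Rightarrow> real \<Rightarrow> real set" where
  "centered_int c l = {c - l/2 <..< c + l/2}"

primrec removed_upto :: "real \<Rightarrow> real \<Rightarrow> nat \<Rightarrow> real set set" where
  "removed_upto L r 0 = {}"
| "removed_upto L r (Suc n) = removed_upto L r n \<union>
     {centered_int ((Inf K + Sup K) / 2) (r powr (- real (Suc n))) | K.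
        K \<in> components ({0..L} - \<Union>(removed_upto L r n))}"

definition removed_all :: "real \<Rightarrow> real \<Rightarrow> real set set" where
  "removed_all L r = (\<Union>n. removed_upto L r n)"

definition cantor_set :: "real set" where
  "cantor_set = {0..1} - \<Union>(removed_all 1 3)"

definition Mc :: real where
  "Mc = 1 / (3 powr (2/3) - 2)"

definition Jall :: "real set set" where
  "Jall = removed_all Mc (3 powr (2/3))"

definition Aset :: "real set" where
  "Aset = {0..Mc} - \<Union>Jall"

definition gfun :: "real \<Rightarrow> real" where
  "gfun x = (if x \<in> Aset then 0 else
     (let I = (THE I. I \<in> Jall \<and> x \<in> I) in
        4 / sqrt (measure lebesgue I) * infdist x (frontier I)))"

definition ffun :: "real \<Rightarrow> real" where
  "ffun x = integral {0..x} gfun"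

end

theory Submission
  imports Defs
begin


locale cl = fixes r :: real assumes r2: "2 < r"
begin

definition "L = 1/(r-2)"
definition "len n = L / r^n"
definition "d n = len n - len (Suc n)"
definition "pt n w = (\<Sum>i<n. if w i then d i else 0)"
definition "P n = range (pt n)"
definition "gap n a = {a + len (Suc n) <..< a + d n}"
definition "Q n = (\<Union>a\<in>P n. {a..a + len n})"

lemma r_pos: "r > 0" using r2 by simp
lemma L_pos: "L > 0" using r2 by (simp add: L_def)
lemma L_eq: "L * (r - 2) = 1" using r2 by (simp add: L_def)
lemma len_pos: "len n > 0" using L_pos r_pos by (simp add: len_def)
lemma len_Suc: "len (Suc n) = len n / r" by (simp add: len_def field_simps)
lemma len_0: "len 0 = L" by (simp add: len_def)
lemma len_key: "len n = 2 * len (Suc n) + 1 / r^(Suc n)"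
proof -
  have "len n * r^(Suc n) = L * r" using r_pos by (simp add: len_def field_simps)
  also have "\<dots> = 2 * L + 1" using L_eq by (simp add: algebra_simps)
  finally have "len n * r^(Suc n) = 2 * L + 1" .
  moreover have "(2 * len (Suc n) + 1 / r^(Suc n)) * r^(Suc n) = 2 * L + 1"
    using r_pos by (simp add: len_def field_simps)
  ultimately show ?thesis using r_pos
    by (metis mult_right_cancel power_not_zero less_irrefl)
qed
lemma d_eq: "d n = len (Suc n) + 1 / r^(Suc n)"
  using len_key[of n] by (simp add: d_def)
lemma d_pos: "d n > 0"
proof -
  have "0 < 1/r^(Suc n)" using r_pos by simp
  then show ?thesis using d_eq[of n] len_pos[of "Suc n"] by linarith
qed
lemma gap_ne: "len (Suc n) < d n" using d_eq[of n] r_pos by simp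
lemma d_Suc: "d (Suc n) = d n / r"
  using r_pos by (simp add: d_def len_Suc field_simps)
lemma rd: "r * d n = len n + 1 / r^n"
  using d_eq[of n] r_pos by (simp add: len_Suc field_simps)
lemma d_len: "d n + len (Suc n) = len n" by (simp add: d_def)

lemma pt_Suc: "pt (Suc n) w = pt n w + (if w n then d n else 0)"
  by (simp add: pt_def)
lemma pt_upd: "pt n (w(n := b)) = pt n w"
  unfolding pt_def by (rule sum.cong) auto
lemma pt_0: "pt 0 w = 0" by (simp add: pt_def)
lemma P_0: "P 0 = {0}" by (auto simp: P_def pt_0)

lemma P_Suc: "P (Suc n) = P n \<union> (\<lambda>a. a + d n) ` P n"
proof
  show "P (Suc n) \<subseteq> P n \<union> (\<lambda>a. a + d n) ` P n"
    by (auto simp: P_def pt_Suc)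
  show "P n \<union> (\<lambda>a. a + d n) ` P n \<subseteq> P (Suc n)"
  proof safe
    fix x assume "x \<in> P n"
    then obtain w where "x = pt n w" by (auto simp: P_def)
    then have "x = pt (Suc n) (w(n := False))" by (simp add: pt_Suc pt_upd)
    then show "x \<in> P (Suc n)" by (simp add: P_def)
  next
    fix x assume "x \<in> P n"
    then obtain w where "x = pt n w" by (auto simp: P_def)
    then have "x + d n = pt (Suc n) (w(n := True))" by (simp add: pt_Suc pt_upd)
    then show "x + d n \<in> P (Suc n)" by (simp add: P_def)
  qed
qed

lemma P_finite: "finite (P n)"
  by (induction n) (auto simp: P_0 P_Suc)

lemma P_bounds: "a \<in> P n \<Longrightarrow> 0 \<le> a \<and> a + len n \<le> L"
proof (induction n arbitrary: a)
  case 0 then show ?case by (simp add: P_0 len_0)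
next
  case (Suc n)
  from Suc.prems consider "a \<in> P n" | b where "b \<in> P n" "a = b + d n" by (auto simp: P_Suc)
  then show ?case
  proof cases
    case 1
    have "len (Suc n) \<le> len n" using len_Suc[of n] len_pos[of n] r2 by (simp add: divide_le_eq)
    then show ?thesis using Suc.IH[of a] 1 by auto
  next
    case 2 then show ?thesis using Suc.IH[of b] d_len[of n] d_pos[of n] len_pos[of "Suc n"] by auto
  qed
qed

lemma P_sep: "a \<in> P n \<Longrightarrow> a' \<in> P n \<Longrightarrow> a < a' \<Longrightarrow> a + r * d n \<le> a'"
proof (induction n arbitrary: a a')
  case 0 then show ?case by (simp add: P_0)
next
  case (Suc n)
  have dS: "r * d (Suc n) = d n" using d_Suc[of n] r_pos by simp
  have dp: "d n > 0" by (rule d_pos)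
  have rdn: "r * d n \<ge> 2 * d n" using r2 dp by simp
  have rdn1: "r * d n \<ge> d n" using rdn dp by linarith
  from Suc.prems(1) consider "a \<in> P n" | b where "b \<in> P n" "a = b + d n" by (auto simp: P_Suc)
  then show ?case
  proof cases
    case 1
    from Suc.prems(2) consider "a' \<in> P n" | b' where "b' \<in> P n" "a' = b' + d n" by (auto simp: P_Suc)
    then show ?thesis
    proof cases
      case 1 then have "a + r * d n \<le> a'" using Suc.IH[of a a'] \<open>a \<in> P n\<close> Suc.prems by auto
      then show ?thesis using dS rdn1 by linarith
    next
      case 2
      show ?thesis
      proof (cases "b' = a")
        case True then show ?thesis using 2 dS by simp
      next
        case False
        then consider "b' < a" | "a < b'" by linarith
        then show ?thesis
        proof cases
          case 1 then have "b' + r * d n \<le> a" using Suc.IH[of b' a] 2 \<open>a \<in> P n\<close> by auto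
          then show ?thesis using 2 Suc.prems rdn dp by auto
        next
          case 3: 2 then have "a + r * d n \<le> b'" using Suc.IH[of a b'] 2 \<open>a \<in> P n\<close> by auto
          then show ?thesis using 2 dS rdn1 dp by linarith
        qed
      qed
    qed
  next
    case 2
    from Suc.prems(2) consider "a' \<in> P n" | b' where "b' \<in> P n" "a' = b' + d n" by (auto simp: P_Suc)
    then show ?thesis
    proof cases
      case 1
      have "b < a'" using 2 Suc.prems dp by auto
      then have "b + r * d n \<le> a'" using Suc.IH[of b a'] 2 1 by auto
      then show ?thesis using 2 dS rdn by auto
    next
      case 3: 2
      then have "b < b'" using 2 Suc.prems by auto
      then have "b + r * d n \<le> b'" using Suc.IH[of b b'] 2 3 by auto
      then show ?thesis using 2 3 dS rdn1 by linarith
    qed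
  qed
qed

lemma P_disj: "a \<in> P n \<Longrightarrow> a' \<in> P n \<Longrightarrow> a \<noteq> a' \<Longrightarrow> x \<in> {a..a + len n} \<Longrightarrow> x \<notin> {a'..a' + len n}"
proof -
  assume h: "a \<in> P n" "a' \<in> P n" "a \<noteq> a'" "x \<in> {a..a + len n}"
  have rp: "1 / r^n > 0" using r_pos by simp
  consider "a < a'" | "a' < a" using h by linarith
  then show ?thesis
  proof cases
    case 1 then have "a + r * d n \<le> a'" using P_sep[of a n a'] h by auto
    moreover have "x \<le> a + len n" using h(4) by simp
    ultimately have "x < a'" using rd[of n] rp by linarith
    then show ?thesis by simp
  next
    case 2 then have "a' + r * d n \<le> a" using P_sep[of a' n a] h by auto
    moreover have "a \<le> x" using h(4) by simp
    ultimately have "x > a' + len n" using rd[of n] rp by linarith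
    then show ?thesis by simp
  qed
qed

end

context cl begin

lemma sepa: "a \<in> P n \<Longrightarrow> a' \<in> P n \<Longrightarrow> a < a' \<Longrightarrow> a + len n + 1/r^n \<le> a'"
  using P_sep[of a n a'] rd[of n] by simp

lemma Q_comp: "components (Q n) = (\<lambda>a. {a..a + len n}) ` P n"
proof -
  define e where "e = 1/r^n"
  have rp: "e > 0" using r_pos by (simp add: e_def)
  have sepe: "a' + len n + e \<le> a''" if "a' \<in> P n" "a'' \<in> P n" "a' < a''" for a' a''
    using sepa[OF that] by (simp add: e_def)
  have mem: "{a..a+len n} \<in> components (Q n)" if a: "a \<in> P n" for a
    unfolding in_components_maximal
  proof (intro conjI allI impI)
    show "{a..a + len n} \<noteq> {}" using len_pos[of n] by simp
    show "{a..a + len n} \<subseteq> Q n" using a by (auto simp: Q_def)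
    show "connected {a..a+len n}" by simp
    fix D assume D: "D \<noteq> {} \<and> {a..a + len n} \<subseteq> D \<and> D \<subseteq> Q n \<and> connected D"
    have iv: "\<forall>u\<in>D. \<forall>v\<in>D. \<forall>x. u \<le> x \<and> x \<le> v \<longrightarrow> x \<in> D"
      using D is_interval_connected_1 is_interval_1 by blast
    have "a \<in> {a..a+len n}" "a + len n \<in> {a..a+len n}" using len_pos[of n] by auto
    then have aD: "a \<in> D" "a + len n \<in> D" using D by blast+
    show "D = {a..a+len n}"
    proof (rule ccontr)
      assume "D \<noteq> {a..a+len n}"
      then obtain y where y: "y \<in> D" "y \<notin> {a..a+len n}" using D by blast
      consider "y > a + len n" | "y < a" using y by auto
      then show False
      proof cases
        case 1
        define m where "m = min (e/2) ((y - (a+len n))/2)"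
        define z where "z = a + len n + m"
        have mm: "0 < m" "m \<le> e/2" "2*m \<le> y - (a+len n)" using 1 rp by (auto simp: min_def m_def)
        have z1a: "a + len n < z" using mm rp 1 unfolding z_def by linarith
        have z1b: "z < y" using mm rp 1 unfolding z_def by linarith
        have z1c: "z < a + len n + e" using mm rp 1 unfolding z_def by linarith
        note z1 = z1a z1b z1c
        have "z \<in> D" using iv aD y(1) z1 by (meson less_eq_real_def)
        then obtain a' where a': "a' \<in> P n" "z \<in> {a'..a'+len n}" using D unfolding Q_def by blast
        consider "a' = a" | "a' < a" | "a' > a" by linarith
        then show False
        proof cases
          case 1 then show False using a' z1 by auto
        next
          case 2 then have "a' + len n + e \<le> a" using sepe a a' by blast
          then show False using a' z1 rp len_pos[of n] by auto
        next
          case 3 then have "a + len n + e \<le> a'" using sepe a a' by blast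
          then show False using a' z1 by auto
        qed
      next
        case 2
        define m where "m = min (e/2) ((a - y)/2)"
        define z where "z = a - m"
        have mm: "0 < m" "m \<le> e/2" "2*m \<le> a - y" using 2 rp by (auto simp: min_def m_def)
        have z1a: "z < a" using mm rp 2 unfolding z_def by linarith
        have z1b: "y < z" using mm rp 2 unfolding z_def by linarith
        have z1c: "a - e < z" using mm rp 2 unfolding z_def by linarith
        note z1 = z1a z1b z1c
        have "z \<in> D" using iv aD y(1) z1 by (meson less_eq_real_def)
        then obtain a' where a': "a' \<in> P n" "z \<in> {a'..a'+len n}" using D unfolding Q_def by blast
        consider "a' = a" | "a' < a" | "a' > a" by linarith
        then show False
        proof cases
          case 1 then show False using a' z1 by auto
        next
          case 2 then have "a' + len n + e \<le> a" using sepe a a' by blast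
          then show False using a' z1 by auto
        next
          case 3 then show False using a' z1 by auto
        qed
      qed
    qed
  qed
  show ?thesis
  proof
    show "(\<lambda>a. {a..a + len n}) ` P n \<subseteq> components (Q n)" using mem by blast
    show "components (Q n) \<subseteq> (\<lambda>a. {a..a + len n}) ` P n"
    proof
      fix C assume C: "C \<in> components (Q n)"
      then obtain x where "x \<in> C" using in_components_nonempty by blast
      then have "x \<in> Q n" using C in_components_subset by blast
      then obtain a where a: "a \<in> P n" "x \<in> {a..a+len n}" by (auto simp: Q_def)
      then have "C = {a..a+len n}" using components_eq[OF C mem[OF a(1)]] \<open>x \<in> C\<close> by blast
      then show "C \<in> (\<lambda>a. {a..a + len n}) ` P n" using a by blast
    qed
  qed
qed

lemma rpow: "r powr (- real (Suc n)) = 1 / r^(Suc n)"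
proof -
  have "r powr (- real (Suc n)) = inverse (r powr real (Suc n))" by (rule powr_minus)
  also have "\<dots> = inverse (r^(Suc n))" by (simp only: powr_realpow[OF r_pos])
  finally show ?thesis by (simp add: inverse_eq_divide)
qed

lemma aux_mid1: fixes a l l' e :: real shows "l = 2*l' + e \<Longrightarrow> (a + (a+l))/2 - e/2 = a + l'"
  by (simp add: field_simps)
lemma aux_mid2: fixes a l l' e :: real shows "l = 2*l' + e \<Longrightarrow> (a + (a+l))/2 + e/2 = a + (l - l')"
  by (simp add: field_simps)

lemma cint: "centered_int ((Inf {a..a+len n} + Sup {a..a+len n})/2) (r powr (- real (Suc n))) = gap n a"
proof -
  have le: "a \<le> a + len n" using len_pos[of n] by simp
  have k: "len n = 2 * len (Suc n) + 1 / r^(Suc n)" by (rule len_key)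
  have "(a + (a + len n)) / 2 - 1 / r^(Suc n) / 2 = a + len (Suc n)" using aux_mid1[OF k] .
  moreover have "(a + (a + len n)) / 2 + 1 / r^(Suc n) / 2 = a + d n" using aux_mid2[OF k] unfolding d_def .
  ultimately show ?thesis
    unfolding centered_int_def gap_def rpow cInf_atLeastAtMost[OF le] cSup_atLeastAtMost[OF le]
    by simp
qed

lemma newset: "{centered_int ((Inf K + Sup K) / 2) (r powr (- real (Suc n))) | K. K \<in> components (Q n)}
   = gap n ` P n"
  unfolding Q_comp using cint by auto

lemma gap_sub: "gap n a \<subseteq> {a..a+len n}"
  using len_pos[of "Suc n"] d_len[of n] len_pos[of n] by (auto simp: gap_def)

lemma Q_Suc: "Q (Suc n) = Q n - \<Union>(gap n ` P n)"
proof (intro set_eqI iffI)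
  fix x assume "x \<in> Q (Suc n)"
  then obtain b where b: "b \<in> P (Suc n)" "x \<in> {b..b+len (Suc n)}" by (auto simp: Q_def)
  have ls: "len (Suc n) \<le> len n" using d_len[of n] d_pos[of n] by linarith
  have dl: "d n + len (Suc n) = len n" by (rule d_len)
  from b(1) consider "b \<in> P n" | c where "c \<in> P n" "b = c + d n" by (auto simp: P_Suc)
  then obtain c where c: "c \<in> P n" "x \<in> {c..c+len n}" "x \<notin> gap n c"
  proof cases
    case 1 then show ?thesis using that[of b] b ls by (auto simp: gap_def)
  next
    case 2 then show ?thesis using that[of c] b dl d_pos[of n] by (auto simp: gap_def)
  qed
  have "x \<notin> gap n a" if "a \<in> P n" for a
  proof (cases "a = c")
    case True then show ?thesis using c by simp
  next
    case False then show ?thesis using P_disj[OF c(1) that _ c(2)] gap_sub[of n a] by auto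
  qed
  then show "x \<in> Q n - \<Union>(gap n ` P n)" using c by (auto simp: Q_def)
next
  fix x assume "x \<in> Q n - \<Union>(gap n ` P n)"
  then obtain a where a: "a \<in> P n" "x \<in> {a..a+len n}" "x \<notin> gap n a" by (auto simp: Q_def)
  have dl: "d n + len (Suc n) = len n" by (rule d_len)
  consider "x \<le> a + len (Suc n)" | "x \<ge> a + d n" using a by (auto simp: gap_def)
  then show "x \<in> Q (Suc n)"
  proof cases
    case 1 then show ?thesis using a by (auto simp: Q_def P_Suc)
  next
    case 2
    then have "x \<in> {a + d n .. a + d n + len (Suc n)}" using a dl by auto
    then show ?thesis using a by (auto simp: Q_def P_Suc)
  qed
qed

lemma Q_0: "Q 0 = {0..L}" by (simp add: Q_def P_0 len_0)

lemma S1: "{0..L} - \<Union>(removed_upto L r n) = Q n \<and> removed_upto L r n = {gap m a | m a. m < n \<and> a \<in> P m}"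
proof (induction n)
  case 0 then show ?case by (simp add: Q_0)
next
  case (Suc n)
  have q: "{0..L} - \<Union>(removed_upto L r n) = Q n" using Suc.IH by blast
  have e: "removed_upto L r (Suc n) = removed_upto L r n \<union> gap n ` P n"
    unfolding removed_upto.simps(2) q newset by (rule refl)
  have "{0..L} - \<Union>(removed_upto L r (Suc n)) = ({0..L} - \<Union>(removed_upto L r n)) - \<Union>(gap n ` P n)"
    unfolding e by blast
  also have "\<dots> = Q n - \<Union>(gap n ` P n)" unfolding q ..
  also have "\<dots> = Q (Suc n)" by (rule Q_Suc[symmetric])
  finally show ?case unfolding e using Suc.IH less_Suc_eq by auto
qed

lemma RA: "removed_all L r = {gap m a | m a. a \<in> P m}"
  unfolding removed_all_def using S1 by auto

lemma AQ: "{0..L} - \<Union>(removed_all L r) = (\<Inter>n. Q n)"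
proof -
  have "{0..L} - \<Union>(removed_all L r) = (\<Inter>n. {0..L} - \<Union>(removed_upto L r n))"
    by (auto simp: removed_all_def)
  moreover have "\<And>n. {0..L} - \<Union>(removed_upto L r n) = Q n" using S1 by blast
  ultimately show ?thesis by simp
qed

lemma Q_anti: "m \<le> n \<Longrightarrow> Q n \<subseteq> Q m"
  by (rule lift_Suc_antimono_le[of Q]) (auto simp: Q_Suc)

lemma gap_Q: "a \<in> P m \<Longrightarrow> gap m a \<inter> Q (Suc m) = {}"
  by (auto simp: Q_Suc)

lemma gap_subQ: "a \<in> P m \<Longrightarrow> gap m a \<subseteq> Q m"
  using gap_sub[of m a] by (auto simp: Q_def)

lemma gap_unique: "a \<in> P m \<Longrightarrow> a' \<in> P m' \<Longrightarrow> x \<in> gap m a \<Longrightarrow> x \<in> gap m' a' \<Longrightarrow> m = m' \<and> a = a'"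
proof -
  assume h: "a \<in> P m" "a' \<in> P m'" "x \<in> gap m a" "x \<in> gap m' a'"
  have "\<not> m < m'" if "a \<in> P m" "a' \<in> P m'" "x \<in> gap m a" "x \<in> gap m' a'" for m m' a a'
  proof
    assume "m < m'"
    then have "x \<in> Q (Suc m)" using gap_subQ[OF that(2)] that(4) Q_anti[of "Suc m" m'] by auto
    then show False using gap_Q[OF that(1)] that(3) by auto
  qed
  then have "m = m'" using h by (meson linorder_neqE_nat)
  moreover have "a = a'"
  proof (rule ccontr)
    assume "a \<noteq> a'"
    have "x \<in> {a..a+len m}" "x \<in> {a'..a'+len m}" using h gap_sub[of m a] gap_sub[of m a'] \<open>m = m'\<close> by blast+
    then show False using P_disj[of a m a' x] h \<open>a \<noteq> a'\<close> \<open>m = m'\<close> by blast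
  qed
  ultimately show ?thesis by simp
qed

end


definition s3 :: real where "s3 = 3 powr (1/3)"

lemma s3_pos: "s3 > 0" by (simp add: s3_def)

lemma s3_cube: "s3^3 = 3"
proof -
  have "s3 powr (3::real) = 3" unfolding s3_def by (simp add: powr_powr)
  then show ?thesis using powr_realpow[OF s3_pos, of 3] by simp
qed

lemma r0_eq: "3 powr (2/3) = s3^2"
proof -
  have "s3 powr (2::real) = 3 powr (2/3)" unfolding s3_def by (simp add: powr_powr)
  then show ?thesis using powr_realpow[OF s3_pos, of 2] by simp
qed

lemma s3_gt1: "s3 > 1"
proof (rule ccontr)
  assume "\<not> s3 > 1"
  then have "s3^3 \<le> 1" using s3_pos by (simp add: power_le_one)
  then show False using s3_cube by simp
qed

lemma r0_gt2: "(2::real) < 3 powr (2/3)"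
proof (rule ccontr)
  assume "\<not> (2::real) < 3 powr (2/3)"
  then have "s3^2 \<le> 2" using r0_eq by simp
  then have "(s3^2)^3 \<le> 2^3" by (rule power_mono) simp
  moreover have "(s3^2)^3 = (s3^3)^2" by (simp add: power_mult[symmetric] mult.commute)
  ultimately show False using s3_cube by simp
qed

interpretation J: cl "3 powr (2/3)" by unfold_locales (rule r0_gt2)
interpretation C: cl "3" by unfold_locales simp

lemma rpow_s: "(3 powr (2/3))^n = (s3^n)^2"
  unfolding r0_eq by (simp add: power_mult[symmetric] mult.commute)

lemma Mc_eq: "Mc = J.L" by (simp add: Mc_def J.L_def)

lemma Jall_eq: "Jall = {J.gap m a | m a. a \<in> J.P m}"
  unfolding Jall_def Mc_eq by (rule J.RA)

lemma Aset_eq: "Aset = (\<Inter>n. J.Q n)"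
  unfolding Aset_def Jall_def Mc_eq by (rule J.AQ)

lemma CL: "C.L = 1" by (simp add: C.L_def)

lemma cantor_eq: "cantor_set = (\<Inter>n. C.Q n)"
  unfolding cantor_set_def using C.AQ by (simp add: CL)

lemma cantor_removed: "removed_all 1 3 = {C.gap m a | m a. a \<in> C.P m}"
  using C.RA by (simp add: CL)

lemma C_len: "C.len n = 1 / 3^n" by (simp add: C.len_def CL)
lemma C_d: "C.d n = 2 / 3^(Suc n)" by (simp add: C.d_def C_len field_simps)

definition tent :: "nat \<Rightarrow> real \<Rightarrow> real \<Rightarrow> real" where
  "tent m a x = 4 * s3^(Suc m) * min (x - (a + J.len (Suc m))) (a + J.d m - x)"

lemma gap_len: "J.d m - J.len (Suc m) = 1 / (s3^(Suc m))^2"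
  using J.d_eq[of m] rpow_s[of "Suc m"] by simp

lemma gap_in: "a \<in> J.P m \<Longrightarrow> x \<in> J.gap m a \<Longrightarrow> x \<in> {0<..<Mc}"
proof -
  assume a: "a \<in> J.P m" and x: "x \<in> J.gap m a"
  have "0 \<le> a" "a + J.len m \<le> J.L" using J.P_bounds[OF a] by auto
  moreover have "J.len (Suc m) > 0" by (rule J.len_pos)
  moreover have "J.d m + J.len (Suc m) = J.len m" by (rule J.d_len)
  ultimately show ?thesis using x by (auto simp: J.gap_def Mc_eq)
qed

lemma gap_notA: "a \<in> J.P m \<Longrightarrow> x \<in> J.gap m a \<Longrightarrow> x \<notin> Aset"
  unfolding Aset_def Jall_eq by blast

lemma cover: "x \<in> {0..Mc} \<Longrightarrow> x \<notin> Aset \<Longrightarrow> \<exists>m a. a \<in> J.P m \<and> x \<in> J.gap m a"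
  unfolding Aset_def Jall_eq by blast

lemma the_gap: "a \<in> J.P m \<Longrightarrow> x \<in> J.gap m a \<Longrightarrow> (THE I. I \<in> Jall \<and> x \<in> I) = J.gap m a"
proof (rule the_equality)
  assume "a \<in> J.P m" "x \<in> J.gap m a"
  then show "J.gap m a \<in> Jall \<and> x \<in> J.gap m a" unfolding Jall_eq by blast
next
  fix I assume a: "a \<in> J.P m" "x \<in> J.gap m a" and I: "I \<in> Jall \<and> x \<in> I"
  then obtain m' a' where "I = J.gap m' a'" "a' \<in> J.P m'" unfolding Jall_eq by blast
  then show "I = J.gap m a" using J.gap_unique[OF a(1) _ a(2), of a' m'] I by auto
qed

lemma frontier_Ioo: "(p::real) < q \<Longrightarrow> frontier {p<..<q} = {p, q}"
  unfolding frontier_def by (auto simp: interior_open)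

lemma gfun_gap: "a \<in> J.P m \<Longrightarrow> x \<in> J.gap m a \<Longrightarrow> gfun x = tent m a x"
proof -
  assume a: "a \<in> J.P m" and x: "x \<in> J.gap m a"
  define p where "p = a + J.len (Suc m)"
  define q where "q = a + J.d m"
  define t where "t = s3^(Suc m)"
  have tp: "t > 0" using s3_pos by (simp add: t_def)
  have G: "J.gap m a = {p<..<q}" by (simp add: J.gap_def p_def q_def)
  have pq: "p < x" "x < q" using x G by auto
  have ql: "q - p = 1 / t^2" using gap_len[of m] by (simp add: p_def q_def t_def)
  have "measure lebesgue {p<..<q} = measure lborel {p<..<q}"
    by (rule measure_completion) simp
  then have meas: "measure lebesgue {p<..<q} = q - p"
    using pq by simp
  have sq: "sqrt (q - p) = 1 / t" using tp by (simp add: ql real_sqrt_divide)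
  have inf: "infdist x (frontier {p<..<q}) = min (x - p) (q - x)"
  proof -
    have fr: "frontier {p<..<q} = {p} \<union> {q}" using pq frontier_Ioo[of p q] by auto
    have "infdist x ({p} \<union> {q}) = min (infdist x {p}) (infdist x {q})" by (rule infdist_Un_min) auto
    then show ?thesis unfolding fr using pq by (simp add: dist_real_def)
  qed
  have "gfun x = 4 / sqrt (measure lebesgue {p<..<q}) * infdist x (frontier {p<..<q})"
    unfolding gfun_def Let_def the_gap[OF a x] using gap_notA[OF a x] G by simp
  also have "\<dots> = 4 * t * min (x - p) (q - x)" using tp by (simp add: meas sq inf)
  finally show ?thesis by (simp add: tent_def t_def p_def q_def)
qed

lemma gfun_A: "x \<in> Aset \<Longrightarrow> gfun x = 0" by (simp add: gfun_def)

lemma tent_bounds: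
  assumes x: "x \<in> J.gap m a"
  shows "tent m a x > 0" "tent m a x \<le> 2 / s3^(Suc m)"
    "y \<notin> J.gap m a \<Longrightarrow> tent m a x \<le> 4 * s3^(Suc m) * \<bar>x - y\<bar>"
proof -
  define p where "p = a + J.len (Suc m)"
  define q where "q = a + J.d m"
  define t where "t = s3^(Suc m)"
  have tp: "t > 0" using s3_pos by (simp add: t_def)
  have G: "J.gap m a = {p<..<q}" by (simp add: J.gap_def p_def q_def)
  have pq: "p < x" "x < q" using x G by auto
  have ql: "q - p = 1 / t^2" using gap_len[of m] by (simp add: p_def q_def t_def)
  have T: "tent m a x = 4 * t * min (x - p) (q - x)" by (simp add: tent_def t_def p_def q_def)
  show "tent m a x > 0" unfolding T using tp pq by simp
  have "2 * min (x - p) (q - x) \<le> q - p" by (auto simp: min_def)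
  then have "min (x - p) (q - x) \<le> 1 / t^2 / 2" using ql by simp
  then have "tent m a x \<le> 4 * t * (1 / t^2 / 2)" unfolding T using tp by (intro mult_left_mono) auto
  also have "\<dots> = 2 / t" using tp by (simp add: power2_eq_square field_simps)
  finally show "tent m a x \<le> 2 / s3^(Suc m)" by (simp add: t_def)
  assume "y \<notin> J.gap m a"
  then have "y \<le> p \<or> y \<ge> q" using G by auto
  then have "min (x - p) (q - x) \<le> \<bar>x - y\<bar>" by auto
  then show "tent m a x \<le> 4 * s3^(Suc m) * \<bar>x - y\<bar>" unfolding T t_def[symmetric]
    using tp by (intro mult_left_mono) auto
qed

lemma g_nonneg: "x \<in> {0..Mc} \<Longrightarrow> gfun x \<ge> 0"
  using cover gfun_A gfun_gap tent_bounds(1) by (metis less_eq_real_def)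

lemma g_pos: "a \<in> J.P m \<Longrightarrow> x \<in> J.gap m a \<Longrightarrow> gfun x > 0"
  using gfun_gap tent_bounds(1) by simp



lemma g_cont: "continuous_on {0..Mc} gfun"
  unfolding continuous_on_eq_continuous_within
proof
  fix x assume x: "x \<in> {0..Mc}"
  show "continuous (at x within {0..Mc}) gfun"
  proof (cases "x \<in> Aset")
    case False
    then obtain m a where a: "a \<in> J.P m" "x \<in> J.gap m a" using cover x by blast
    define p where "p = a + J.len (Suc m)"
    define q where "q = a + J.d m"
    have G: "J.gap m a = {p<..<q}" by (simp add: J.gap_def p_def q_def)
    have pq: "p < x" "x < q" using a G by auto
    have tc: "continuous (at x within {0..Mc}) (tent m a)"
      unfolding tent_def by (intro continuous_intros)
    show ?thesis
    proof (rule continuous_transform_within[OF tc, where \<delta> = "min (x - p) (q - x)"])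
      show "0 < min (x - p) (q - x)" using pq by simp
      show "x \<in> {0..Mc}" by (rule x)
      fix x' assume "x' \<in> {0..Mc}" "dist x' x < min (x - p) (q - x)"
      then have "x' \<in> J.gap m a" using G by (auto simp: dist_real_def)
      then show "tent m a x' = gfun x'" using gfun_gap[OF a(1)] by simp
    qed
  next
    case True
    have g0: "gfun x = 0" using gfun_A True by simp
    show ?thesis unfolding continuous_within_eps_delta
    proof (intro allI impI)
      fix \<epsilon> :: real assume ep: "\<epsilon> > 0"
      obtain N where N: "2 / \<epsilon> < s3^N" using real_arch_pow[OF s3_gt1] by blast
      have sN: "s3^N > 0" using s3_pos by simp
      define \<delta> where "\<delta> = \<epsilon> / (4 * s3^N)"
      have dp: "\<delta> > 0" using ep sN by (simp add: \<delta>_def)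
      have "\<forall>x'\<in>{0..Mc}. dist x' x < \<delta> \<longrightarrow> dist (gfun x') (gfun x) < \<epsilon>"
      proof (intro ballI impI)
        fix x' assume x': "x' \<in> {0..Mc}" "dist x' x < \<delta>"
        show "dist (gfun x') (gfun x) < \<epsilon>"
        proof (cases "x' \<in> Aset")
          case True then show ?thesis using g0 gfun_A ep by simp
        next
          case False
          then obtain m a where a: "a \<in> J.P m" "x' \<in> J.gap m a" using cover x' by blast
          have gx: "gfun x' = tent m a x'" by (rule gfun_gap[OF a])
          have tpos: "tent m a x' > 0" by (rule tent_bounds(1)[OF a(2)])
          have "tent m a x' < \<epsilon>"
          proof (cases "N \<le> m")
            case True
            have "s3^N \<le> s3^(Suc m)" using True s3_gt1 by (intro power_increasing) auto
            then have "2 / s3^(Suc m) \<le> 2 / s3^N" using sN by (intro divide_left_mono) auto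
            moreover have "2 / s3^N < \<epsilon>" using N ep sN by (simp add: field_simps)
            ultimately show ?thesis using tent_bounds(2)[OF a(2)] by linarith
          next
            case False
            have xn: "x \<notin> J.gap m a" using gap_notA[OF a(1)] True by blast
            have "s3^(Suc m) \<le> s3^N" using False s3_gt1 by (intro power_increasing) auto
            have "tent m a x' \<le> 4 * s3^(Suc m) * \<bar>x' - x\<bar>" by (rule tent_bounds(3)[OF a(2) xn])
            also have "\<dots> \<le> 4 * s3^N * \<bar>x' - x\<bar>"
              using \<open>s3^(Suc m) \<le> s3^N\<close> by (intro mult_right_mono) auto
            also have "\<dots> < 4 * s3^N * \<delta>"
              using x'(2) sN by (intro mult_strict_left_mono) (auto simp: dist_real_def)
            also have "\<dots> = \<epsilon>" using sN s3_pos unfolding \<delta>_def by (simp add: field_simps)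
            finally show ?thesis .
          qed
          then show ?thesis using gx g0 tpos by (simp add: dist_real_def)
        qed
      qed
      then show "\<exists>\<delta>>0. \<forall>x'\<in>{0..Mc}. dist x' x < \<delta> \<longrightarrow> dist (gfun x') (gfun x) < \<epsilon>"
        using dp by blast
    qed
  qed
qed

lemma g_int: "{u..v} \<subseteq> {0..Mc} \<Longrightarrow> gfun integrable_on {u..v}"
  by (rule integrable_on_subinterval[OF integrable_continuous_interval[OF g_cont]])

lemma ffun_eq: "ffun = (\<lambda>x. integral {0..x} gfun)"
  by (rule ext) (simp add: ffun_def)

lemma ffun_deriv: "x \<in> {0..Mc} \<Longrightarrow> (ffun has_real_derivative gfun x) (at x within {0..Mc})"
  unfolding has_real_derivative_iff_has_vector_derivative ffun_eq
  by (rule integral_has_vector_derivative[OF g_cont])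

lemma ffun_diff: "0 \<le> u \<Longrightarrow> u \<le> v \<Longrightarrow> v \<le> Mc \<Longrightarrow> ffun v - ffun u = integral {u..v} gfun"
  using Henstock_Kurzweil_Integration.integral_combine[where a=0 and c=u and b=v and f=gfun] g_int[of 0 v] by (simp add: ffun_def)

lemma ffun_mono: "0 \<le> u \<Longrightarrow> u \<le> v \<Longrightarrow> v \<le> Mc \<Longrightarrow> ffun u \<le> ffun v"
proof -
  assume h: "0 \<le> u" "u \<le> v" "v \<le> Mc"
  have "0 \<le> integral {u..v} gfun"
    by (rule integral_nonneg[OF g_int]) (use h g_nonneg in auto)
  then show ?thesis using ffun_diff[OF h] by simp
qed

lemma ffun_cont: "continuous_on {0..Mc} ffun"
  unfolding ffun_eq by (rule indefinite_integral_continuous_1[OF g_int]) simp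

lemma ffun_0: "ffun 0 = 0" by (simp add: ffun_def)



lemma Pb: "a \<in> J.P n \<Longrightarrow> 0 \<le> a \<and> a + J.len n \<le> Mc"
  using J.P_bounds Mc_eq by simp

lemma s3_pow3: "(s3^n)^3 = 3^n"
  by (metis power_mult mult.commute s3_cube)

lemma Jlen_eq: "J.len n = J.L / (s3^n)^2"
  by (simp add: J.len_def rpow_s)

definition Tn :: "nat \<Rightarrow> real \<Rightarrow> real" where
  "Tn n a = integral {a..a + J.len n} gfun"

lemma g_le: "a \<in> J.P n \<Longrightarrow> y \<in> {a..a + J.len n} \<Longrightarrow> gfun y \<le> 2 / s3^(Suc n)"
proof -
  assume a: "a \<in> J.P n" and y: "y \<in> {a..a + J.len n}"
  have y0: "y \<in> {0..Mc}" using Pb[OF a] y by auto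
  have pos: "0 < 2 / s3^(Suc n)" using s3_pos by simp
  show ?thesis
  proof (cases "y \<in> Aset")
    case True then show ?thesis using gfun_A pos by simp
  next
    case False
    then obtain m a' where a': "a' \<in> J.P m" "y \<in> J.gap m a'" using cover y0 by blast
    have yQ: "y \<in> J.Q n" using a y by (auto simp: J.Q_def)
    have "n \<le> m"
    proof (rule ccontr)
      assume "\<not> n \<le> m"
      then have "J.Q n \<subseteq> J.Q (Suc m)" by (intro J.Q_anti) simp
      then show False using J.gap_Q[OF a'(1)] a'(2) yQ by blast
    qed
    have "s3^(Suc n) \<le> s3^(Suc m)" using \<open>n \<le> m\<close> s3_gt1 by (intro power_increasing) auto
    then have "2 / s3^(Suc m) \<le> 2 / s3^(Suc n)" using s3_pos by (intro divide_left_mono) auto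
    then show ?thesis using gfun_gap[OF a'] tent_bounds(2)[OF a'(2)] by simp
  qed
qed

lemma T_bound: "a \<in> J.P n \<Longrightarrow> 0 \<le> Tn n a \<and> Tn n a \<le> 2 * J.L / 3^n"
proof -
  assume a: "a \<in> J.P n"
  have sub: "{a..a + J.len n} \<subseteq> {0..Mc}" using Pb[OF a] by auto
  have lp: "J.len n > 0" by (rule J.len_pos)
  have "0 \<le> Tn n a" unfolding Tn_def
    by (rule integral_nonneg[OF g_int[OF sub]]) (use sub g_nonneg in auto)
  moreover have "Tn n a \<le> integral {a..a + J.len n} (\<lambda>_. 2 / s3^(Suc n))" unfolding Tn_def
    by (rule integral_le[OF g_int[OF sub]]) (use g_le[OF a] in auto)
  moreover have "integral {a..a + J.len n} (\<lambda>_. 2 / s3^(Suc n)) = J.len n * (2 / s3^(Suc n))"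
    using lp by simp
  moreover have "J.len n * (2 / s3^(Suc n)) = 2 * J.L / (s3 * 3^n)"
    unfolding Jlen_eq s3_pow3[symmetric] using s3_pos
    by (simp add: power2_eq_square power3_eq_cube field_simps)
  moreover have "2 * J.L / (s3 * 3^n) \<le> 2 * J.L / 3^n"
    using s3_gt1 J.L_pos by (intro divide_left_mono) auto
  ultimately show ?thesis by linarith
qed

lemma tent_int: "a \<in> J.P m \<Longrightarrow> integral {a + J.len (Suc m)..a + J.d m} gfun = 1 / 3^(Suc m)"
proof -
  assume a: "a \<in> J.P m"
  define p where "p = a + J.len (Suc m)"
  define q where "q = a + J.d m"
  define t where "t = s3^(Suc m)"
  define c where "c = 4 * t"
  define mid where "mid = (p + q) / 2"
  have tp: "t > 0" using s3_pos by (simp add: t_def)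
  have G: "J.gap m a = {p<..<q}" by (simp add: J.gap_def p_def q_def)
  have ql: "q - p = 1 / t^2" using gap_len[of m] by (simp add: p_def q_def t_def)
  have "1 / t^2 > 0" using tp by simp
  then have pq: "p < q" using ql by linarith
  have pm: "p \<le> mid" "mid \<le> q" using pq by (auto simp: mid_def)
  have h1: "((\<lambda>x. c * (x - p)) has_integral (c * (mid - p)^2 / 2 - c * (p - p)^2 / 2)) {p..mid}"
  proof (rule fundamental_theorem_of_calculus[OF pm(1)])
    fix x assume "x \<in> {p..mid}"
    show "((\<lambda>x. c * (x - p)^2 / 2) has_vector_derivative c * (x - p)) (at x within {p..mid})"
      unfolding has_real_derivative_iff_has_vector_derivative[symmetric]
      by (auto intro!: derivative_eq_intros simp: power2_eq_square field_simps)
  qed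
  have h2: "((\<lambda>x. c * (q - x)) has_integral (- c * (q - q)^2 / 2 - (- c * (q - mid)^2 / 2))) {mid..q}"
  proof (rule fundamental_theorem_of_calculus[OF pm(2)])
    fix x assume "x \<in> {mid..q}"
    show "((\<lambda>x. - c * (q - x)^2 / 2) has_vector_derivative c * (q - x)) (at x within {mid..q})"
      unfolding has_real_derivative_iff_has_vector_derivative[symmetric]
      by (auto intro!: derivative_eq_intros simp: power2_eq_square field_simps)
  qed
  have h1': "((\<lambda>x. c * min (x - p) (q - x)) has_integral (c * (mid - p)^2 / 2)) {p..mid}"
  proof -
    have hA: "((\<lambda>x. c * (x - p)) has_integral (c * (mid - p)^2 / 2)) {p..mid}" using h1 by simp
    show ?thesis
      by (rule has_integral_spike_finite[where S="{}", OF _ _ hA]) (auto simp: mid_def min_def)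
  qed
  have h2': "((\<lambda>x. c * min (x - p) (q - x)) has_integral (c * (q - mid)^2 / 2)) {mid..q}"
  proof -
    have hA: "((\<lambda>x. c * (q - x)) has_integral (c * (q - mid)^2 / 2)) {mid..q}" using h2 by simp
    show ?thesis
      by (rule has_integral_spike_finite[where S="{}", OF _ _ hA]) (auto simp: mid_def min_def)
  qed
  have hh: "((\<lambda>x. c * min (x - p) (q - x)) has_integral (c * (mid - p)^2 / 2 + c * (q - mid)^2 / 2)) {p..q}"
    by (rule has_integral_combine[OF pm h1' h2'])
  have val: "c * (mid - p)^2 / 2 + c * (q - mid)^2 / 2 = 1 / 3^(Suc m)"
  proof -
    have d1: "mid - p = 1 / (2 * t^2)" and d2: "q - mid = 1 / (2 * t^2)" using ql by (auto simp: mid_def field_simps)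
    have "c * (mid - p)^2 / 2 + c * (q - mid)^2 / 2 = c * (1 / (2 * t^2))^2" unfolding d1 d2 by simp
    also have "\<dots> = 1 / t^3"
      using tp by (simp add: c_def power2_eq_square power3_eq_cube field_simps)
    finally have "c * (mid - p)^2 / 2 + c * (q - mid)^2 / 2 = 1 / t^3" .
    also have "t^3 = 3^(Suc m)" unfolding t_def by (rule s3_pow3)
    finally show ?thesis .
  qed
  have "integral {p..q} gfun = integral {p..q} (\<lambda>x. c * min (x - p) (q - x))"
  proof (rule integral_spike[of "{p, q}"])
    show "negligible {p, q}" by (rule negligible_finite) simp
    fix x assume "x \<in> {p..q} - {p, q}"
    then have "x \<in> J.gap m a" using G by auto
    then show "c * min (x - p) (q - x) = gfun x"
      using gfun_gap[OF a] by (simp add: tent_def c_def t_def p_def q_def)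
  qed
  also have "\<dots> = 1 / 3^(Suc m)" using integral_unique[OF hh] val by simp
  finally show ?thesis by (simp add: p_def q_def)
qed

lemma T_rec: "a \<in> J.P n \<Longrightarrow> Tn n a = Tn (Suc n) a + 1 / 3^(Suc n) + Tn (Suc n) (a + J.d n)"
proof -
  assume a: "a \<in> J.P n"
  define p where "p = a + J.len (Suc n)"
  define q where "q = a + J.d n"
  define e where "e = a + J.len n"
  have eq: "q + J.len (Suc n) = e" using J.d_len[of n] by (simp add: q_def e_def)
  have o: "a \<le> p" "p \<le> q" "q \<le> e" using J.len_pos[of "Suc n"] J.gap_ne[of n] eq
    by (auto simp: p_def q_def)
  have sub: "{a..e} \<subseteq> {0..Mc}" using Pb[OF a] by (auto simp: e_def)
  have i1: "integral {a..p} gfun + integral {p..e} gfun = integral {a..e} gfun"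
    by (rule Henstock_Kurzweil_Integration.integral_combine) (use o g_int[OF sub] in auto)
  have sub2: "{p..e} \<subseteq> {0..Mc}" using sub o by auto
  have i2: "integral {p..q} gfun + integral {q..e} gfun = integral {p..e} gfun"
    by (rule Henstock_Kurzweil_Integration.integral_combine) (use o g_int[OF sub2] in auto)
  have "integral {p..q} gfun = 1 / 3^(Suc n)" using tent_int[OF a] by (simp add: p_def q_def)
  then show ?thesis using i1 i2 eq unfolding Tn_def p_def[symmetric] e_def[symmetric] q_def[symmetric]
    by simp
qed

lemma T_val: "a \<in> J.P n \<Longrightarrow> Tn n a = 1 / 3^n"
proof -
  define K where "K = 2 * J.L + 1"
  have Kp: "K > 0" using J.L_pos by (simp add: K_def)
  have eb: "\<bar>Tn n a - 1/3^n\<bar> \<le> K / 3^n" if "a \<in> J.P n" for n a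
  proof -
    have "0 \<le> Tn n a" "Tn n a \<le> 2 * J.L / 3^n" using T_bound[OF that] by auto
    moreover have "0 < 1 / (3::real)^n" by simp
    moreover have "K / 3^n = 2 * J.L / 3^n + 1 / 3^n" by (simp add: K_def add_divide_distrib)
    ultimately show ?thesis by linarith
  qed
  have ind: "\<forall>n a. a \<in> J.P n \<longrightarrow> \<bar>Tn n a - 1/3^n\<bar> \<le> K * 2^k / 3^(n+k)" for k
  proof (induction k)
    case 0 then show ?case using eb by simp
  next
    case (Suc k)
    show ?case
    proof (intro allI impI)
      fix n a assume a: "a \<in> J.P n"
      have a1: "a \<in> J.P (Suc n)" "a + J.d n \<in> J.P (Suc n)" using a by (auto simp: J.P_Suc)
      have "Tn n a - 1/3^n = (Tn (Suc n) a - 1/3^(Suc n)) + (Tn (Suc n) (a + J.d n) - 1/3^(Suc n))"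
      proof -
        have t3: "1/(3::real)^n = 3 * (1/3^(Suc n))" by simp
        show ?thesis using T_rec[OF a] t3 by linarith
      qed
      then have "\<bar>Tn n a - 1/3^n\<bar> \<le> \<bar>Tn (Suc n) a - 1/3^(Suc n)\<bar> + \<bar>Tn (Suc n) (a + J.d n) - 1/3^(Suc n)\<bar>"
        by linarith
      also have "\<dots> \<le> K * 2^k / 3^(Suc n + k) + K * 2^k / 3^(Suc n + k)"
        using Suc.IH a1 by (meson add_mono)
      also have "\<dots> = K * 2^(Suc k) / 3^(n + Suc k)" by simp
      finally show "\<bar>Tn n a - 1/3^n\<bar> \<le> K * 2^(Suc k) / 3^(n + Suc k)" .
    qed
  qed
  assume a: "a \<in> J.P n"
  show ?thesis
  proof (rule ccontr)
    assume "Tn n a \<noteq> 1 / 3^n"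
    then have ep: "\<bar>Tn n a - 1/3^n\<bar> > 0" by simp
    obtain k where k: "(2/3::real)^k < \<bar>Tn n a - 1/3^n\<bar> * 3^n / K"
      using real_arch_pow_inv[of "\<bar>Tn n a - 1/3^n\<bar> * 3^n / K" "2/3"] ep Kp by auto
    have "K * 2^k / 3^(n+k) = K / 3^n * (2/3)^k" by (simp add: power_add power_divide)
    also have "\<dots> < K / 3^n * (\<bar>Tn n a - 1/3^n\<bar> * 3^n / K)"
      using k Kp by (intro mult_strict_left_mono) auto
    also have "\<dots> = \<bar>Tn n a - 1/3^n\<bar>" using Kp by simp
    moreover have "\<bar>Tn n a - 1/3^n\<bar> \<le> K * 2^k / 3^(n+k)" using ind[of k] a by blast
    ultimately show False by linarith
  qed
qed

lemma Jpt_P: "J.pt n w \<in> J.P n" by (simp add: J.P_def)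
lemma Cpt_P: "C.pt n w \<in> C.P n" by (simp add: C.P_def)

lemma ffun_pt: "ffun (J.pt n w) = C.pt n w"
proof (induction n)
  case 0 then show ?case by (simp add: J.pt_0 C.pt_0 ffun_0)
next
  case (Suc n)
  define a where "a = J.pt n w"
  have aP: "a \<in> J.P n" by (simp add: a_def Jpt_P)
  show ?case
  proof (cases "w n")
    case False then show ?thesis using Suc by (simp add: J.pt_Suc C.pt_Suc)
  next
    case True
    have aP1: "a \<in> J.P (Suc n)" using aP by (simp add: J.P_Suc)
    have b: "0 \<le> a" "a + J.len n \<le> Mc" using Pb[OF aP] by auto
    have o: "a \<le> a + J.len (Suc n)" "a + J.len (Suc n) \<le> a + J.d n" "a + J.d n \<le> Mc"
      using J.len_pos[of "Suc n"] J.gap_ne[of n] J.d_len[of n] b by auto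
    have sub: "{a..a + J.d n} \<subseteq> {0..Mc}" using b o by auto
    have "ffun (a + J.d n) - ffun a = integral {a..a + J.d n} gfun"
      using ffun_diff b o by simp
    also have "\<dots> = Tn (Suc n) a + integral {a + J.len (Suc n)..a + J.d n} gfun"
      unfolding Tn_def
      by (rule Henstock_Kurzweil_Integration.integral_combine[symmetric]) (use o g_int[OF sub] in auto)
    also have "\<dots> = 2 / 3^(Suc n)" using T_val[OF aP1] tent_int[OF aP] by simp
    finally have "ffun (a + J.d n) = C.pt n w + C.d n" using Suc by (simp add: a_def C_d)
    then show ?thesis using True by (simp add: J.pt_Suc C.pt_Suc a_def)
  qed
qed

lemma ffun_end: "ffun (J.pt n w + J.len n) = C.pt n w + C.len n"
proof -
  have aP: "J.pt n w \<in> J.P n" by (rule Jpt_P)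
  have b: "0 \<le> J.pt n w" "J.pt n w + J.len n \<le> Mc" using Pb[OF aP] by auto
  have "ffun (J.pt n w + J.len n) - ffun (J.pt n w) = Tn n (J.pt n w)"
    unfolding Tn_def using ffun_diff b J.len_pos[of n] by simp
  then show ?thesis using T_val[OF aP] ffun_pt[of n w] by (simp add: C_len)
qed



lemma gfun_zero_iff: "x \<in> {0..Mc} \<Longrightarrow> gfun x = 0 \<longleftrightarrow> x \<in> Aset"
proof
  assume x: "x \<in> {0..Mc}" and g: "gfun x = 0"
  show "x \<in> Aset"
  proof (rule ccontr)
    assume "x \<notin> Aset"
    then obtain m a where "a \<in> J.P m" "x \<in> J.gap m a" using cover x by blast
    then show False using g_pos g by fastforce
  qed
next
  assume "x \<in> Aset" then show "gfun x = 0" by (rule gfun_A)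
qed

lemma image_sub: "ffun ` Aset \<subseteq> cantor_set"
proof
  fix y assume "y \<in> ffun ` Aset"
  then obtain x where x: "x \<in> Aset" "y = ffun x" by blast
  show "y \<in> cantor_set" unfolding cantor_eq
  proof (rule INT_I)
    fix n :: nat
    have "x \<in> J.Q n" using x Aset_eq by blast
    then obtain a where a: "a \<in> J.P n" "x \<in> {a..a + J.len n}" by (auto simp: J.Q_def)
    then obtain w where w: "a = J.pt n w" by (auto simp: J.P_def)
    have b: "0 \<le> a" "a + J.len n \<le> Mc" using Pb[OF a(1)] by auto
    have "ffun a \<le> ffun x" using b a by (intro ffun_mono) auto
    moreover have "ffun x \<le> ffun (a + J.len n)" using b a by (intro ffun_mono) auto
    ultimately have "y \<in> {C.pt n w .. C.pt n w + C.len n}"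
      using ffun_pt[of n w] ffun_end[of n w] w x by auto
    then show "y \<in> C.Q n" using Cpt_P[of n w] by (auto simp: C.Q_def)
  qed
qed

lemma image_sup: "cantor_set \<subseteq> ffun ` Aset"
proof
  fix y assume y: "y \<in> cantor_set"
  have "y \<in> C.Q 0" using y cantor_eq by blast
  then have y01: "0 \<le> y" "y \<le> 1" by (auto simp: C.Q_0 CL)
  have f0: "ffun 0 = 0" by (rule ffun_0)
  have fM: "ffun Mc = 1"
    using ffun_end[of 0 "\<lambda>_. False"] by (simp add: J.pt_0 C.pt_0 J.len_0 C.len_0 CL Mc_eq)
  have Mp: "0 \<le> Mc" using J.L_pos Mc_eq by simp
  obtain x where x: "0 \<le> x" "x \<le> Mc" "ffun x = y"
    using IVT'[of ffun 0 y Mc] y01 f0 fM Mp ffun_cont by auto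
  show "y \<in> ffun ` Aset"
  proof (cases "x \<in> Aset")
    case True then show ?thesis using x by blast
  next
    case False
    have "x \<in> {0..Mc}" using x by simp
    then obtain m a where a: "a \<in> J.P m" "x \<in> J.gap m a" using cover False by blast
    then obtain w where w: "a = J.pt m w" by (auto simp: J.P_def)
    define p where "p = a + J.len (Suc m)"
    define q where "q = a + J.d m"
    define c where "c = C.pt m w"
    have G: "J.gap m a = {p<..<q}" by (simp add: J.gap_def p_def q_def)
    have px: "p < x" "x < q" using a G by auto
    have b: "0 \<le> a" "a + J.len m \<le> Mc" using Pb[OF a(1)] by auto
    have p0: "0 \<le> p" using b J.len_pos[of "Suc m"] by (simp add: p_def)
    have qM: "q \<le> Mc" using b J.d_len[of m] J.len_pos[of "Suc m"] by (simp add: q_def)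
    have fp: "ffun p = c + C.len (Suc m)"
    proof -
      have "J.pt (Suc m) (w(m := False)) = a" by (simp add: J.pt_Suc J.pt_upd w)
      moreover have "C.pt (Suc m) (w(m := False)) = c" by (simp add: C.pt_Suc C.pt_upd c_def)
      ultimately show ?thesis using ffun_end[of "Suc m" "w(m := False)"] by (simp add: p_def)
    qed
    have fq: "ffun q = c + C.d m"
    proof -
      have "J.pt (Suc m) (w(m := True)) = a + J.d m" by (simp add: J.pt_Suc J.pt_upd w)
      moreover have "C.pt (Suc m) (w(m := True)) = c + C.d m" by (simp add: C.pt_Suc C.pt_upd c_def)
      ultimately show ?thesis using ffun_pt[of "Suc m" "w(m := True)"] by (simp add: q_def)
    qed
    have pos: "integral {u..v} gfun > 0" if "p \<le> u" "u < v" "v \<le> q" for u v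
    proof -
      have "integral {u..v} (\<lambda>_. 0::real) < integral {u..v} gfun"
      proof (rule integral_less_real)
        show "continuous_on {u..v} (\<lambda>_. 0::real)" by simp
        show "continuous_on {u..v} gfun" by (rule continuous_on_subset[OF g_cont]) (use p0 qM that in auto)
        show "{u<..<v} \<noteq> {}" using that by simp
        fix z assume "z \<in> {u<..<v}"
        then have "z \<in> J.gap m a" using G that by auto
        then show "0 < gfun z" using g_pos[OF a(1)] by simp
      qed
      then show ?thesis by simp
    qed
    have "ffun x - ffun p > 0" using ffun_diff[of p x] pos[of p x] p0 px qM by simp
    moreover have "ffun q - ffun x > 0" using ffun_diff[of x q] pos[of x q] p0 px qM by simp
    ultimately have "y \<in> C.gap m c" using fp fq x by (simp add: C.gap_def)
    moreover have "C.gap m c \<in> removed_all 1 3" unfolding cantor_removed c_def using Cpt_P by blast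
    ultimately have "y \<notin> cantor_set" unfolding cantor_set_def by blast
    then show ?thesis using y by simp
  qed
qed

theorem lemma4:
  shows "(\<exists>f'. (\<forall>x\<in>{0..Mc}. (ffun has_real_derivative f' x) (at x within {0..Mc}))
              \<and> continuous_on {0..Mc} f'
              \<and> (\<forall>x\<in>{0..Mc}. f' x = 0 \<longleftrightarrow> x \<in> Aset))
         \<and> ffun ` Aset = cantor_set"
proof (intro conjI)
  show "\<exists>f'. (\<forall>x\<in>{0..Mc}. (ffun has_real_derivative f' x) (at x within {0..Mc}))
              \<and> continuous_on {0..Mc} f'
              \<and> (\<forall>x\<in>{0..Mc}. f' x = 0 \<longleftrightarrow> x \<in> Aset)"
    using ffun_deriv g_cont gfun_zero_iff by blast
  show "ffun ` Aset = cantor_set" using image_sub image_sup by blast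
qed



end
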